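(* Let $\mathcal{K}\subset\mathbb{R}^n$ be a compact convex set and let $\phi:\mathcal{K}\to\mathbb{R}$ be continuous. Then for every $\varepsilon>0$ there exist a positive integer $p$ and, with $T=1/p$, a function $f_T\in\mathrm{DLSE}_T$ with rational parameters such that $|f_T(\mathbf{x})-\phi(\mathbf{x})|\leqslant\varepsilon$ for all $\mathbf{x}\in\mathcal{K}$.
   Context: For $T>0$, $\mathrm{LSE}_T$ denotes the class of functions $f_T:\mathbb{R}^n\to\mathbb{R}$ of the form $$f_T(\mathbf{x})=T\log\Big(\sum_{k=1}^K \exp\big(\langle\boldsymbol{\alpha}^{(k)},\mathbf{x}\rangle/T+\beta_k/T\big)\Big)$$ for some positive integer $K$, vectors $\boldsymbol{\alpha}^{(k)}\in\mathbb{R}^n$ and real numbers $\beta_k$. Such a function has rational parameters if $T$ is rational and it can be written in this form with all entries of the $\boldsymbol{\alpha}^{(k)}$ and all $\beta_k$ rational. $\mathrm{DLSE}_T$ is the class of functions $g_T-h_T$ with $g_T,h_T\in\mathrm{LSE}_T$ (same $T$); such a function has rational parameters if $g_T$ and $h_T$ both have rational parameters. *)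

theory Defs
  imports "HOL-Analysis.Analysis"
begin

definition lse :: "real \<Rightarrow> ((real^'n) \<times> real) list \<Rightarrow> real^'n \<Rightarrow> real" where
  "lse T ps x = T * ln (\<Sum>(a, b)\<leftarrow>ps. exp (inner a x / T + b / T))"

definition LSE_rat :: "real \<Rightarrow> (real^'n \<Rightarrow> real) \<Rightarrow> bool" where
  "LSE_rat T f \<longleftrightarrow> T > 0 \<and> T \<in> \<rat> \<and>
     (\<exists>ps. ps \<noteq> [] \<and> (\<forall>(a, b)\<in>set ps. (\<forall>i. a $ i \<in> \<rat>) \<and> b \<in> \<rat>) \<and> f = lse T ps)"

definition DLSE_rat :: "real \<Rightarrow> (real^'n \<Rightarrow> real) \<Rightarrow> bool" where
  "DLSE_rat T f \<longleftrightarrow> (\<exists>g h. LSE_rat T g \<and> LSE_rat T h \<and> f = (\<lambda>x. g x - h x))"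

end

theory Submission imports Defs begin

lemma sum_list_member_le:
  fixes f :: "'a \<Rightarrow> real"
  assumes "\<And>y. y \<in> set xs \<Longrightarrow> f y \<ge> 0" "x \<in> set xs"
  shows "f x \<le> sum_list (map f xs)"
  using assms
proof (induction xs)
  case Nil then show ?case by simp
next
  case (Cons y ys)
  have nn: "0 \<le> sum_list (map f ys)"
    using Cons.prems(1) by (intro sum_list_nonneg) auto
  show ?case
  proof (cases "x = y")
    case True then show ?thesis using nn by simp
  next
    case False
    then have "f x \<le> sum_list (map f ys)" using Cons by auto
    then show ?thesis using Cons.prems(1)[of y] by simp
  qed
qed

lemma lse_lower:
  fixes x :: "real^'n"
  assumes T: "T > 0" and ab: "(a, b) \<in> set ps"
  shows "inner a x + b \<le> lse T ps x"
proof -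
  let ?f = "\<lambda>(a, b). exp (inner a x / T + b / T)"
  have le: "?f (a, b) \<le> sum_list (map ?f ps)"
    by (rule sum_list_member_le) (use ab in auto)
  have pos: "0 < ?f (a, b)" by simp
  have "(inner a x + b) / T \<le> ln (sum_list (map ?f ps))"
  proof -
    have sp: "0 < sum_list (map ?f ps)" using le pos by linarith
    show ?thesis using le sp by (subst ln_ge_iff) (auto simp: add_divide_distrib)
  qed
  then have "inner a x + b \<le> T * ln (sum_list (map ?f ps))"
    using T by (simp add: divide_le_eq mult.commute)
  then show ?thesis unfolding lse_def by simp
qed

lemma lse_upper:
  fixes x :: "real^'n"
  assumes T: "T > 0" and ne: "ps \<noteq> []"
    and U: "\<And>a b. (a, b) \<in> set ps \<Longrightarrow> inner a x + b \<le> U"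
  shows "lse T ps x \<le> U + T * ln (real (length ps))"
proof -
  let ?f = "\<lambda>(a, b). exp (inner a x / T + b / T)"
  obtain a0 b0 where ab0: "(a0, b0) \<in> set ps" using ne by (cases ps) auto
  have le: "?f (a0, b0) \<le> sum_list (map ?f ps)"
    by (rule sum_list_member_le) (use ab0 in auto)
  have spos: "0 < sum_list (map ?f ps)" using le by (smt (verit) exp_gt_zero prod.simps(2))
  have "sum_list (map ?f ps) \<le> sum_list (map (\<lambda>_. exp (U / T)) ps)"
  proof (rule sum_list_mono)
    fix y assume "y \<in> set ps"
    obtain a b where y0: "y = (a, b)" by (cases y)
    with \<open>y \<in> set ps\<close> have y: "y = (a, b)" "(a, b) \<in> set ps" by auto
    have "inner a x / T + b / T \<le> U / T"
      using U[OF y(2)] T by (simp add: add_divide_distrib[symmetric] divide_right_mono)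
    then show "?f y \<le> exp (U / T)" using y by simp
  qed
  also have "\<dots> = real (length ps) * exp (U / T)" by (simp add: sum_list_triv)
  finally have s: "sum_list (map ?f ps) \<le> real (length ps) * exp (U / T)" .
  have lpos: "real (length ps) > 0" using ne by simp
  have "ln (sum_list (map ?f ps)) \<le> ln (real (length ps) * exp (U / T))"
    using s spos by simp
  also have "\<dots> = ln (real (length ps)) + U / T" using lpos by (simp add: ln_mult)
  finally have "T * ln (sum_list (map ?f ps)) \<le> T * (ln (real (length ps)) + U / T)"
    using T by (simp add: mult_left_mono)
  also have "\<dots> = U + T * ln (real (length ps))" using T by (simp add: algebra_simps)
  finally show ?thesis unfolding lse_def by simp
qed

lemma rat_vec_approx:
  fixes c :: "real^'n"
  assumes "\<delta> > 0"
  shows "\<exists>d::real^'n. (\<forall>i. d $ i \<in> \<rat>) \<and> norm (d - c) < \<delta>"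
proof -
  define e where "e = \<delta> / (real CARD('n) + 1)"
  have e: "e > 0" using assms by (simp add: e_def)
  have "\<forall>i. \<exists>q. q \<in> \<rat> \<and> \<bar>q - c $ i\<bar> < e"
  proof
    fix i
    obtain r where "r \<in> \<rat>" "c $ i - e < r" "r < c $ i + e"
      using Rats_dense_in_real[of "c $ i - e" "c $ i + e"] e by auto
    then show "\<exists>q. q \<in> \<rat> \<and> \<bar>q - c $ i\<bar> < e" by (intro exI[of _ r]) auto
  qed
  then obtain q where q: "\<And>i. q i \<in> \<rat>" "\<And>i. \<bar>q i - c $ i\<bar> < e" by metis
  define d :: "real^'n" where "d = (\<chi> i. q i)"
  have "norm (d - c) \<le> (\<Sum>i\<in>UNIV. \<bar>(d - c) $ i\<bar>)" by (rule norm_le_l1_cart)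
  also have "\<dots> \<le> of_nat (card (UNIV :: 'n set)) * e"
    by (rule sum_bounded_above) (use q in \<open>auto simp: d_def less_imp_le\<close>)
  also have "\<dots> < \<delta>" using assms e unfolding e_def by (simp add: field_simps)
  finally show ?thesis using q by (intro exI[of _ d]) (auto simp: d_def)
qed


theorem theorem2:
  fixes K :: "(real^'n) set" and \<phi> :: "real^'n \<Rightarrow> real" and \<epsilon> :: real
  assumes "compact K" and "convex K" and "continuous_on K \<phi>" and "\<epsilon> > 0"
  shows "\<exists>p::nat. p > 0 \<and> (\<exists>f. DLSE_rat (1 / real p) f \<and>
           (\<forall>x\<in>K. \<bar>f x - \<phi> x\<bar> \<le> \<epsilon>))"
proof (cases "K = {}")
  case True
  have L: "LSE_rat 1 (lse 1 [(0::real^'n, 0)])"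
    unfolding LSE_rat_def by (intro conjI exI[of _ "[(0::real^'n, 0)]"]) auto
  have "DLSE_rat (1 / real (1::nat)) (\<lambda>x. lse 1 [(0::real^'n, 0)] x - lse 1 [(0::real^'n, 0)] x)"
    unfolding DLSE_rat_def using L by (intro exI conjI) (auto simp del: diff_self)
  then show ?thesis using True by (intro exI[of _ "1::nat"]) auto
next
  case Kne: False
  note cK = assms(1) and contK = assms(3) and eps = assms(4)
  obtain M where M: "\<And>x. x \<in> K \<Longrightarrow> \<bar>\<phi> x\<bar> \<le> M"
    using compact_imp_bounded[OF compact_continuous_image[OF contK cK]]
    unfolding bounded_iff by auto
  have M0: "M \<ge> 0" using M Kne by force
  obtain B where B: "\<And>x. x \<in> K \<Longrightarrow> norm x \<le> B"
    using compact_imp_bounded[OF cK] unfolding bounded_iff by auto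
  have B0: "B \<ge> 0" using B Kne by (meson equals0I norm_ge_zero order_trans)
  have uc: "uniformly_continuous_on K \<phi>" by (rule compact_uniformly_continuous[OF contK cK])
  obtain r where r: "r > 0"
    and rK: "\<And>x x'. x \<in> K \<Longrightarrow> x' \<in> K \<Longrightarrow> dist x' x < r \<Longrightarrow> dist (\<phi> x') (\<phi> x) < \<epsilon> / 4"
    using uc eps unfolding uniformly_continuous_on_def
    by (metis divide_pos_pos zero_less_numeral)
  define L where "L = 2 * M / r\<^sup>2 + 1"
  have L0: "L > 0" using M0 r by (simp add: L_def add_nonneg_pos)
  have Lr: "L * r\<^sup>2 \<ge> 2 * M" using r by (simp add: L_def algebra_simps)
  define h where "h = min 1 (min r (\<epsilon> / (4 * L)))"
  have h0: "h > 0" using r eps L0 by (simp add: h_def)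
  have h1: "h \<le> 1" and hr: "h \<le> r" by (auto simp: h_def)
  have hL: "L * h \<le> \<epsilon> / 4"
  proof -
    have "h \<le> \<epsilon> / (4 * L)" by (simp add: h_def)
    then show ?thesis using L0 by (simp add: field_simps)
  qed
  obtain C where CK: "C \<subseteq> K" and Cfin: "finite C" and Ccov: "K \<subseteq> (\<Union>c\<in>C. ball c h)"
    using compactE_image[OF cK, of K "\<lambda>c. ball c h"] h0 by force
  obtain cs where cs: "set cs = C" using finite_list[OF Cfin] by auto
  have csne: "cs \<noteq> []" using Kne Ccov cs by auto
  define \<eta> where "\<eta> = \<epsilon> / 8"
  have \<eta>0: "\<eta> > 0" using eps by (simp add: \<eta>_def)
  define \<delta> where "\<delta> = \<eta> / (2 * (B + 1))"
  have \<delta>0: "\<delta> > 0" using \<eta>0 B0 by (simp add: \<delta>_def)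
  have \<delta>B: "\<delta> * B \<le> \<eta> / 2"
    using \<eta>0 B0 by (simp add: \<delta>_def field_simps)
  have "\<forall>c. \<exists>d::real^'n. (\<forall>i. d $ i \<in> \<rat>) \<and> norm (d - (2 * L) *\<^sub>R c) < \<delta>"
    using rat_vec_approx[OF \<delta>0] by blast
  then obtain A :: "real^'n \<Rightarrow> real^'n"
    where A: "\<And>c i. A c $ i \<in> \<rat>" "\<And>c. norm (A c - (2 * L) *\<^sub>R c) < \<delta>" by metis
  have rat_sc: "\<forall>c. \<exists>q. q \<in> \<rat> \<and> \<bar>q - t c\<bar> < \<eta> / 2" for t :: "real^'n \<Rightarrow> real"
  proof
    fix c
    obtain q where "q \<in> \<rat>" "t c - \<eta> / 2 < q" "q < t c + \<eta> / 2"
      using Rats_dense_in_real[of "t c - \<eta> / 2" "t c + \<eta> / 2"] \<eta>0 by auto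
    then show "\<exists>q. q \<in> \<rat> \<and> \<bar>q - t c\<bar> < \<eta> / 2"
    proof (intro exI[of _ q] conjI)
      show "\<bar>q - t c\<bar> < \<eta> / 2" using \<open>t c - \<eta> / 2 < q\<close> \<open>q < t c + \<eta> / 2\<close> by linarith
    qed simp
  qed
  from choice[OF rat_sc[of "\<lambda>c. \<phi> c -(L * inner c c)"]] obtain Bg
    where Bg0: "\<forall>c. Bg c \<in> \<rat> \<and> \<bar>Bg c - (\<phi> c -(L * inner c c))\<bar> < \<eta> / 2" ..
  have Bg: "\<And>c. Bg c \<in> \<rat>" "\<And>c. \<bar>Bg c - (\<phi> c -(L * inner c c))\<bar> < \<eta> / 2"
    using Bg0 by auto
  from choice[OF rat_sc[of "\<lambda>c. -(L * inner c c)"]] obtain Bh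
    where Bh0: "\<forall>c::real^'n. Bh c \<in> \<rat> \<and> \<bar>Bh c - (-(L * inner c c))\<bar> < \<eta> / 2" ..
  have Bh: "\<And>c::real^'n. Bh c \<in> \<rat>" "\<And>c::real^'n. \<bar>Bh c - (-(L * inner c c))\<bar> < \<eta> / 2"
    using Bh0 by auto
  define N where "N = length cs"
  have N1: "real N \<ge> 1" using csne by (simp add: N_def Suc_le_eq)
  have lnN: "ln (real N) \<ge> 0" using N1 by simp
  obtain n :: nat where n: "4 * ln (real N) / \<epsilon> < real n" using reals_Archimedean2 by blast
  define p where "p = Suc n"
  have p0: "p > 0" by (simp add: p_def)
  define T where "T = 1 / real p"
  have T0: "T > 0" using p0 by (simp add: T_def)
  have TQ: "T \<in> \<rat>" by (simp add: T_def)
  have TlnN: "T * ln (real N) \<le> \<epsilon> / 4"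
  proof -
    have "4 * ln (real N) / \<epsilon> < real p" using n by (simp add: p_def)
    then have "4 * ln (real N) < real p * \<epsilon>" using eps by (simp add: divide_less_eq)
    then show ?thesis using p0 by (simp add: T_def field_simps)
  qed
  define psG where "psG = map (\<lambda>c. (A c, Bg c)) cs"
  define psH where "psH = map (\<lambda>c. (A c, Bh c)) cs"
  define Q where "Q c x = inner (x - c) (x - c)" for c x :: "real^'n"
  have ident: "inner ((2 * L) *\<^sub>R c) x -(L * inner c c) = L * inner x x - L * Q c x" for c x
    by (simp add: Q_def inner_diff_left inner_diff_right inner_commute algebra_simps)
  have lin: "\<bar>inner (A c) x - inner ((2 * L) *\<^sub>R c) x\<bar> \<le> \<eta> / 2" if "x \<in> K" for c x
  proof -
    have "\<bar>inner (A c) x - inner ((2 * L) *\<^sub>R c) x\<bar> = \<bar>inner (A c - (2 * L) *\<^sub>R c) x\<bar>"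
      by (simp add: inner_diff_left)
    also have "\<dots> \<le> norm (A c - (2 * L) *\<^sub>R c) * norm x" by (rule Cauchy_Schwarz_ineq2)
    also have "\<dots> \<le> \<delta> * B"
      using A(2)[of c] B[OF that] \<delta>0 by (intro mult_mono) auto
    finally show ?thesis using \<delta>B by linarith
  qed
  have EG: "\<bar>inner (A c) x + Bg c - (\<phi> c + L * inner x x - L * Q c x)\<bar> \<le> \<eta>" if "x \<in> K" for c x
    using lin[OF that, of c] Bg(2)[of c] ident[of c x] by linarith
  have EH: "\<bar>inner (A c) x + Bh c - (L * inner x x - L * Q c x)\<bar> \<le> \<eta>" if "x \<in> K" for c x
    using lin[OF that, of c] Bh(2)[of c] ident[of c x] by linarith
  have Qnorm: "Q c x = (norm (x - c))\<^sup>2" for c x by (simp add: Q_def power2_norm_eq_inner)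
  have Q0: "Q c x \<ge> 0" for c x by (simp add: Qnorm)
  have LSEG: "LSE_rat T (lse T psG)"
    unfolding LSE_rat_def using T0 TQ csne A(1) Bg(1)
    by (intro conjI exI[of _ psG]) (auto simp: psG_def)
  have LSEH: "LSE_rat T (lse T psH)"
    unfolding LSE_rat_def using T0 TQ csne A(1) Bh(1)
    by (intro conjI exI[of _ psH]) (auto simp: psH_def)
  define f where "f x = lse T psG x - lse T psH x" for x
  have D: "DLSE_rat (1 / real p) f"
    unfolding DLSE_rat_def using LSEG LSEH by (auto simp: f_def[abs_def] T_def)
  have bound: "\<bar>f x - \<phi> x\<bar> \<le> \<epsilon>" if xK: "x \<in> K" for x
  proof -
    obtain c0 where c0: "c0 \<in> set cs" "dist c0 x < h" using Ccov xK cs by (auto simp: dist_commute)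
    have c0K: "c0 \<in> K" using c0 CK cs by auto
    have phic0: "\<bar>\<phi> c0 - \<phi> x\<bar> < \<epsilon> / 4"
      using rK[OF xK c0K] c0(2) hr by (simp add: dist_real_def)
    have Qc0: "L * Q c0 x \<le> \<epsilon> / 4"
    proof -
      have nx: "norm (x - c0) < h" using c0(2) by (simp add: dist_norm norm_minus_commute)
      have "Q c0 x \<le> h\<^sup>2" unfolding Qnorm by (rule power_mono) (use nx in auto)
      also have "\<dots> \<le> h" using h0 h1 by (simp add: power2_eq_square mult_le_cancel_right1)
      finally have "L * Q c0 x \<le> L * h" using L0 by simp
      then show ?thesis using hL by linarith
    qed
    have Nps: "length psG = N" "length psH = N" by (auto simp: psG_def psH_def N_def)
    have G_lo: "lse T psG x \<ge> inner (A c0) x + Bg c0"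
      by (rule lse_lower[OF T0]) (use c0 in \<open>auto simp: psG_def\<close>)
    have H_lo: "lse T psH x \<ge> inner (A c0) x + Bh c0"
      by (rule lse_lower[OF T0]) (use c0 in \<open>auto simp: psH_def\<close>)
    have H_up: "lse T psH x \<le> (L * inner x x + \<eta>) + T * ln (real N)"
    proof -
      have "lse T psH x \<le> (L * inner x x + \<eta>) + T * ln (real (length psH))"
      proof (rule lse_upper[OF T0])
        show "psH \<noteq> []" using csne by (simp add: psH_def)
        fix a b assume "(a, b) \<in> set psH"
        then obtain c where "a = A c" "b = Bh c" by (auto simp: psH_def)
        then show "inner a x + b \<le> L * inner x x + \<eta>"
          using EH[OF xK, of c] Q0[of c x] L0 by (smt (verit) mult_nonneg_nonneg)
      qed
      then show ?thesis using Nps by simp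
    qed
    have G_up: "lse T psG x \<le> (\<phi> x + \<epsilon> / 4 + L * inner x x + \<eta>) + T * ln (real N)"
    proof -
      have "lse T psG x \<le> (\<phi> x + \<epsilon> / 4 + L * inner x x + \<eta>) + T * ln (real (length psG))"
      proof (rule lse_upper[OF T0])
        show "psG \<noteq> []" using csne by (simp add: psG_def)
        fix a b assume "(a, b) \<in> set psG"
        then obtain c where ab: "a = A c" "b = Bg c" and c: "c \<in> set cs" by (auto simp: psG_def)
        have cK: "c \<in> K" using c CK cs by auto
        have key: "\<phi> c - L * Q c x \<le> \<phi> x + \<epsilon> / 4"
        proof (cases "dist c x < r")
          case True
          then have "\<bar>\<phi> c - \<phi> x\<bar> < \<epsilon> / 4" using rK[OF xK cK] by (simp add: dist_real_def)
          then show ?thesis using Q0[of c x] L0 by (smt (verit) mult_nonneg_nonneg)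
        next
          case False
          then have "r \<le> norm (x - c)" by (simp add: dist_norm norm_minus_commute)
          then have "r\<^sup>2 \<le> Q c x" unfolding Qnorm using r by (intro power_mono) auto
          then have "L * r\<^sup>2 \<le> L * Q c x" using L0 by simp
          then show ?thesis using Lr M[OF cK] M[OF xK] eps by linarith
        qed
        show "inner a x + b \<le> \<phi> x + \<epsilon> / 4 + L * inner x x + \<eta>"
          using EG[OF xK, of c] key unfolding ab by linarith
      qed
      then show ?thesis using Nps by simp
    qed
    have "f x - \<phi> x \<ge> - \<epsilon>"
      using G_lo H_up EG[OF xK, of c0] phic0 Qc0 TlnN unfolding f_def \<eta>_def by linarith
    moreover have "f x - \<phi> x \<le> \<epsilon>"
      using G_up H_lo EH[OF xK, of c0] Qc0 TlnN unfolding f_def \<eta>_def by linarith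
    ultimately show ?thesis by linarith
  qed
  show ?thesis using p0 D bound by blast
qed

end
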